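(* Assume the setting in the context and that Conditions (T), (M), (D), (S) and (G) all hold. (a) If $\widetilde{\operatorname{Tr}}^\Omega_{\mathcal{X}}\widehat{\mathbf{S}}^L_\Omega:\mathcal{N}_{\mathcal{X}}\to\mathcal{D}_{\mathcal{X}}$ is one-to-one, then for each $f\in\mathcal{D}_{\mathcal{X}}$ there is at most one $u\in\mathcal{X}^\Omega$ with $(\widehat Lu)|_\Omega=0$ and $\widetilde{\operatorname{Tr}}^\Omega_{\mathcal{X}}u=f$. If there is a constant $C_0$ with $\|g\|_{\mathcal{N}_{\mathcal{X}}}\le C_0\|\widetilde{\operatorname{Tr}}^\Omega_{\mathcal{X}}\widehat{\mathbf{S}}^L_\Omega g\|_{\mathcal{D}_{\mathcal{X}}}$ for all $g\in\mathcal{N}_{\mathcal{X}}$, then there is a constant $C_1$ such that every $u\in\mathcal{X}^\Omega$ with $(\widehat Lu)|_\Omega=0$ satisfies $\|u\|_{\mathcal{X}^\Omega}\le C_1\|\widetilde{\operatorname{Tr}}^\Omega_{\mathcal{X}}u\|_{\mathcal{D}_{\mathcal{X}}}$. (b) If $\widehat{\mathbf{M}}^\Omega_B\widehat{\mathbf{D}}^B_\Omega:\mathcal{D}_{\mathcal{X}}\to\mathcal{N}_{\mathcal{X}}$ is one-to-one, then for each $g\in\mathcal{N}_{\mathcal{X}}$ there is at most one $u\in\mathcal{X}^\Omega$ with $(\widehat Lu)|_\Omega=0$ and $\widehat{\mathbf{M}}^\Omega_Bu=g$. If there is a constant $C_0$ with $\|f\|_{\mathcal{D}_{\mathcal{X}}}\le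 C_0\|\widehat{\mathbf{M}}^\Omega_B\widehat{\mathbf{D}}^B_\Omega f\|_{\mathcal{N}_{\mathcal{X}}}$ for all $f\in\mathcal{D}_{\mathcal{X}}$, then there is a constant $C_1$ such that every $u\in\mathcal{X}^\Omega$ with $(\widehat Lu)|_\Omega=0$ satisfies $\|u\|_{\mathcal{X}^\Omega}\le C_1\|\widehat{\mathbf{M}}^\Omega_Bu\|_{\mathcal{N}_{\mathcal{X}}}$.
   Context: Let $\mathcal{X}^\Omega$, $\mathcal{D}_{\mathcal{X}}$, $\mathcal{N}_{\mathcal{X}}$ be quasi-Banach spaces. Let $u\mapsto(\widehat Lu)|_\Omega$ be a linear operator on $\mathcal{X}^\Omega$ (with values in some vector space), and let $\mathcal{K}^\Omega=\{u\in\mathcal{X}^\Omega:(\widehat Lu)|_\Omega=0\}$. Let $\widetilde{\operatorname{Tr}}^\Omega_{\mathcal{X}}:\mathcal{K}^\Omega\to\mathcal{D}_{\mathcal{X}}$, $\widehat{\mathbf{M}}^\Omega_B:\mathcal{K}^\Omega\to\mathcal{N}_{\mathcal{X}}$, $\widehat{\mathbf{D}}^B_\Omega:\mathcal{D}_{\mathcal{X}}\to\mathcal{X}^\Omega$ and $\widehat{\mathbf{S}}^L_\Omega:\mathcal{N}_{\mathcal{X}}\to\mathcal{X}^\Omega$ be linear operators. Conditions: (T) $\widetilde{\operatorname{Tr}}^\Omega_{\mathcal{X}}$ is bounded $\mathcal{K}^\Omega\to\mathcal{D}_{\mathcal{X}}$ (with the $\mathcal X^\Omega$ quasi-norm on $\mathcal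 K^\Omega$); (M) $\widehat{\mathbf{M}}^\Omega_B$ is bounded $\mathcal{K}^\Omega\to\mathcal{N}_{\mathcal{X}}$; (S) $\widehat{\mathbf{S}}^L_\Omega$ is bounded $\mathcal{N}_{\mathcal{X}}\to\mathcal{X}^\Omega$ and $\widehat{\mathbf{S}}^L_\Omega g\in\mathcal{K}^\Omega$ for all $g\in\mathcal{N}_{\mathcal{X}}$; (D) $\widehat{\mathbf{D}}^B_\Omega$ is bounded $\mathcal{D}_{\mathcal{X}}\to\mathcal{X}^\Omega$ and $\widehat{\mathbf{D}}^B_\Omega f\in\mathcal{K}^\Omega$ for all $f\in\mathcal{D}_{\mathcal{X}}$; (G) every $u\in\mathcal{K}^\Omega$ satisfies $u=-\widehat{\mathbf{D}}^B_\Omega(\widetilde{\operatorname{Tr}}^\Omega_{\mathcal{X}}u)+\widehat{\mathbf{S}}^L_\Omega(\widehat{\mathbf{M}}^\Omega_Bu)$. *)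

theory Defs
  imports "HOL-Analysis.Analysis"
begin

definition quasi_norm :: "('a::real_vector \<Rightarrow> real) \<Rightarrow> bool" where
  "quasi_norm q \<longleftrightarrow>
     (\<forall>x. 0 \<le> q x) \<and> (\<forall>x. q x = 0 \<longleftrightarrow> x = 0) \<and>
     (\<forall>c x. q (c *\<^sub>R x) = \<bar>c\<bar> * q x) \<and>
     (\<exists>\<kappa>\<ge>1. \<forall>x y. q (x + y) \<le> \<kappa> * (q x + q y))"

definition quasi_banach :: "('a::real_vector \<Rightarrow> real) \<Rightarrow> bool" where
  "quasi_banach q \<longleftrightarrow> quasi_norm q \<and>
     (\<forall>X :: nat \<Rightarrow> 'a. (\<forall>e>0. \<exists>N. \<forall>m\<ge>N. \<forall>n\<ge>N. q (X m - X n) < e) \<longrightarrow>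
        (\<exists>l. (\<lambda>n. q (X n - l)) \<longlonglongrightarrow> 0))"

definition linear_on :: "'a::real_vector set \<Rightarrow> ('a \<Rightarrow> 'b::real_vector) \<Rightarrow> bool" where
  "linear_on A T \<longleftrightarrow>
     (\<forall>x\<in>A. \<forall>y\<in>A. T (x + y) = T x + T y) \<and> (\<forall>c. \<forall>x\<in>A. T (c *\<^sub>R x) = c *\<^sub>R T x)"

definition bounded_on :: "'a set \<Rightarrow> ('a \<Rightarrow> real) \<Rightarrow> ('b \<Rightarrow> real) \<Rightarrow> ('a \<Rightarrow> 'b) \<Rightarrow> bool" where
  "bounded_on A qa qb T \<longleftrightarrow> (\<exists>C. \<forall>x\<in>A. qb (T x) \<le> C * qa x)"

end

theory Submission
  imports Defs
begin

lemma qn_facts: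
  assumes "quasi_norm q"
  shows "\<And>x. 0 \<le> q x" "q 0 = 0" "\<And>x. q (- x) = q x"
    "\<exists>k\<ge>1. \<forall>x y. q (x + y) \<le> k * (q x + q y)"
proof -
  show "\<And>x. 0 \<le> q x" "q 0 = 0" "\<exists>k\<ge>1. \<forall>x y. q (x + y) \<le> k * (q x + q y)"
    using assms unfolding quasi_norm_def by auto
  fix x
  have "q ((-1) *\<^sub>R x) = \<bar>-1\<bar> * q x" using assms unfolding quasi_norm_def by blast
  then show "q (- x) = q x" by simp
qed

lemma bnd_pos:
  assumes "bounded_on A qa qb T" "\<And>x. 0 \<le> qa x"
  shows "\<exists>C\<ge>0. \<forall>x\<in>A. qb (T x) \<le> C * qa x"
proof -
  obtain C where C: "\<forall>x\<in>A. qb (T x) \<le> C * qa x" using assms(1) unfolding bounded_on_def by blast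
  have "\<forall>x\<in>A. qb (T x) \<le> max C 0 * qa x"
  proof
    fix x assume "x \<in> A"
    have "C * qa x \<le> max C 0 * qa x" using assms(2)[of x] by (simp add: mult_right_mono)
    thus "qb (T x) \<le> max C 0 * qa x" using C \<open>x\<in>A\<close> by force
  qed
  thus ?thesis by (intro exI[of _ "max C 0"]) auto
qed

theorem theorem6p2:
  fixes nX :: "'x::real_vector \<Rightarrow> real"
    and nD :: "'d::real_vector \<Rightarrow> real"
    and nN :: "'n::real_vector \<Rightarrow> real"
    and L :: "'x \<Rightarrow> 'v::real_vector"
    and Tr :: "'x \<Rightarrow> 'd" and M :: "'x \<Rightarrow> 'n"
    and D :: "'d \<Rightarrow> 'x" and S :: "'n \<Rightarrow> 'x"
    and K :: "'x set"
  assumes qbX: "quasi_banach nX" and qbD: "quasi_banach nD" and qbN: "quasi_banach nN"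
    and linL: "linear L"
    and K_def: "K = {u. L u = 0}"
    and linTr: "linear_on K Tr" and linM: "linear_on K M"
    and linD: "linear D" and linS: "linear S"
    and T: "bounded_on K nX nD Tr"
    and Mb: "bounded_on K nX nN M"
    and S1: "bounded_on UNIV nN nX S" and S2: "\<forall>g. S g \<in> K"
    and D1: "bounded_on UNIV nD nX D" and D2: "\<forall>f. D f \<in> K"
    and G: "\<forall>u\<in>K. u = - D (Tr u) + S (M u)"
  shows "((inj (\<lambda>g. Tr (S g)) \<longrightarrow>
            (\<forall>f u1 u2. L u1 = 0 \<and> Tr u1 = f \<and> L u2 = 0 \<and> Tr u2 = f \<longrightarrow> u1 = u2)) \<and>
          ((\<exists>C0. \<forall>g. nN g \<le> C0 * nD (Tr (S g))) \<longrightarrow>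
            (\<exists>C1. \<forall>u. L u = 0 \<longrightarrow> nX u \<le> C1 * nD (Tr u))))
       \<and> ((inj (\<lambda>f. M (D f)) \<longrightarrow>
            (\<forall>g u1 u2. L u1 = 0 \<and> M u1 = g \<and> L u2 = 0 \<and> M u2 = g \<longrightarrow> u1 = u2)) \<and>
          ((\<exists>C0. \<forall>f. nD f \<le> C0 * nN (M (D f))) \<longrightarrow>
            (\<exists>C1. \<forall>u. L u = 0 \<longrightarrow> nX u \<le> C1 * nN (M u))))"
proof -
  have qX: "quasi_norm nX" and qD: "quasi_norm nD" and qN: "quasi_norm nN"
    using qbX qbD qbN unfolding quasi_banach_def by auto
  note X = qn_facts[OF qX] and DD = qn_facts[OF qD] and NN = qn_facts[OF qN]
  obtain kX where kX: "kX \<ge> 1" "\<And>x y. nX (x + y) \<le> kX * (nX x + nX y)" using X(4) by blast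
  obtain kD where kD: "kD \<ge> 1" "\<And>x y. nD (x + y) \<le> kD * (nD x + nD y)" using DD(4) by blast
  obtain kN where kN: "kN \<ge> 1" "\<And>x y. nN (x + y) \<le> kN * (nN x + nN y)" using NN(4) by blast
  obtain CT where CT: "CT \<ge> 0" "\<And>x. x \<in> K \<Longrightarrow> nD (Tr x) \<le> CT * nX x"
    using bnd_pos[OF T X(1)] by blast
  obtain CM where CM: "CM \<ge> 0" "\<And>x. x \<in> K \<Longrightarrow> nN (M x) \<le> CM * nX x"
    using bnd_pos[OF Mb X(1)] by blast
  obtain CS where CS: "CS \<ge> 0" "\<And>x. nX (S x) \<le> CS * nN x"
    using bnd_pos[OF S1 NN(1)] by blast
  obtain CD where CD: "CD \<ge> 0" "\<And>x. nX (D x) \<le> CD * nD x"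
    using bnd_pos[OF D1 DD(1)] by blast
  have Kadd: "x \<in> K \<Longrightarrow> y \<in> K \<Longrightarrow> x + y \<in> K" for x y
    using linL K_def by (simp add: linear_add)
  have Kscale: "x \<in> K \<Longrightarrow> c *\<^sub>R x \<in> K" for x c
    using linL K_def by (simp add: linear_scale)
  have Kneg: "x \<in> K \<Longrightarrow> - x \<in> K" for x using Kscale[of x "-1"] by simp
  have Kdiff: "x \<in> K \<Longrightarrow> y \<in> K \<Longrightarrow> x - y \<in> K" for x y
    using Kadd Kneg by (metis diff_conv_add_uminus)
  have Tradd: "x \<in> K \<Longrightarrow> y \<in> K \<Longrightarrow> Tr (x + y) = Tr x + Tr y" for x y
    using linTr unfolding linear_on_def by blast
  have Trsc: "x \<in> K \<Longrightarrow> Tr (c *\<^sub>R x) = c *\<^sub>R Tr x" for x c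
    using linTr unfolding linear_on_def by blast
  have Madd: "x \<in> K \<Longrightarrow> y \<in> K \<Longrightarrow> M (x + y) = M x + M y" for x y
    using linM unfolding linear_on_def by blast
  have Msc: "x \<in> K \<Longrightarrow> M (c *\<^sub>R x) = c *\<^sub>R M x" for x c
    using linM unfolding linear_on_def by blast
  have K0: "0 \<in> K" using K_def linL by (simp add: linear_0)
  have Tr0: "Tr 0 = 0" using Trsc[OF K0, of 0] by simp
  have M0: "M 0 = 0" using Msc[OF K0, of 0] by simp
  have Trneg: "x \<in> K \<Longrightarrow> Tr (- x) = - Tr x" for x using Trsc[of x "-1"] by simp
  have Mneg: "x \<in> K \<Longrightarrow> M (- x) = - M x" for x using Msc[of x "-1"] by simp
  have Trdiff: "x \<in> K \<Longrightarrow> y \<in> K \<Longrightarrow> Tr (x - y) = Tr x - Tr y" for x y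
    using Tradd[of x "-y"] Kneg Trneg by simp
  have Mdiff: "x \<in> K \<Longrightarrow> y \<in> K \<Longrightarrow> M (x - y) = M x - M y" for x y
    using Madd[of x "-y"] Kneg Mneg by simp
  have S0: "S 0 = 0" using linS by (simp add: linear_0)
  have D0: "D 0 = 0" using linD by (simp add: linear_0)
  have Dneg: "D (- f) = - D f" for f using linD by (simp add: linear_neg)
  have inK: "L u = 0 \<Longrightarrow> u \<in> K" for u using K_def by simp
  have a1: "inj (\<lambda>g. Tr (S g)) \<longrightarrow>
            (\<forall>f u1 u2. L u1 = 0 \<and> Tr u1 = f \<and> L u2 = 0 \<and> Tr u2 = f \<longrightarrow> u1 = u2)"
  proof (rule impI, intro allI)
    fix f u1 u2 assume inj: "inj (\<lambda>g. Tr (S g))"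
    show "L u1 = 0 \<and> Tr u1 = f \<and> L u2 = 0 \<and> Tr u2 = f \<longrightarrow> u1 = u2"
    proof
      assume h: "L u1 = 0 \<and> Tr u1 = f \<and> L u2 = 0 \<and> Tr u2 = f"
      define w where "w = u1 - u2"
      have wK: "w \<in> K" using h inK Kdiff w_def by blast
      have Trw: "Tr w = 0" using h inK Trdiff w_def by simp
      have w: "w = S (M w)" using G wK Trw D0 by force
      have "Tr (S (M w)) = Tr (S 0)" using w Trw S0 Tr0 by simp
      hence "M w = 0" using inj unfolding inj_def by blast
      hence "w = 0" using w S0 by simp
      thus "u1 = u2" using w_def by simp
    qed
  qed
  have a2: "(\<exists>C0. \<forall>g. nN g \<le> C0 * nD (Tr (S g))) \<longrightarrow>
            (\<exists>C1. \<forall>u. L u = 0 \<longrightarrow> nX u \<le> C1 * nD (Tr u))"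
  proof
    assume "\<exists>C0. \<forall>g. nN g \<le> C0 * nD (Tr (S g))"
    then obtain C00 where C00: "\<And>g. nN g \<le> C00 * nD (Tr (S g))" by blast
    define C0 where "C0 = max C00 0"
    have C0p: "C0 \<ge> 0" unfolding C0_def by simp
    have C0: "nN g \<le> C0 * nD (Tr (S g))" for g
      using C00[of g] DD(1)[of "Tr (S g)"] unfolding C0_def
      by (smt (verit) mult_right_mono max.cobounded1)
    show "\<exists>C1. \<forall>u. L u = 0 \<longrightarrow> nX u \<le> C1 * nD (Tr u)"
    proof (intro exI allI impI)
      fix u assume "L u = 0"
      hence uK: "u \<in> K" by (rule inK)
      let ?t = "nD (Tr u)"
      have eq: "S (M u) = u + D (Tr u)" using G uK by (metis add_minus_cancel add.commute)
      have "Tr (S (M u)) = Tr u + Tr (D (Tr u))" using eq Tradd uK D2 by simp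
      have tD: "nD (Tr (D (Tr u))) \<le> CT * CD * ?t"
        using CT(2)[OF D2[rule_format]] CD(2)[of "Tr u"] CT(1)
        by (metis mult.assoc mult_left_mono order_trans)
      have "nD (Tr (S (M u))) \<le> kD * (?t + CT * CD * ?t)"
        using kD(2)[of "Tr u" "Tr (D (Tr u))"] \<open>Tr (S (M u)) = _\<close> tD kD(1) by (smt (verit) mult_left_mono)
      hence nM: "nN (M u) \<le> C0 * (kD * (?t + CT * CD * ?t))"
        using C0[of "M u"] C0p by (smt (verit) mult_left_mono)
      have "nX u \<le> kX * (nX (- D (Tr u)) + nX (S (M u)))"
        using kX(2) G uK by metis
      also have "\<dots> \<le> kX * (CD * ?t + CS * (C0 * (kD * (?t + CT * CD * ?t))))"
        using X(3) CD(2)[of "Tr u"] CS(2)[of "M u"] nM CS(1) kX(1)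
        by (smt (verit) mult_left_mono)
      also have "\<dots> = (kX * (CD + CS * (C0 * (kD * (1 + CT * CD))))) * ?t"
        by (simp add: algebra_simps)
      finally show "nX u \<le> (kX * (CD + CS * (C0 * (kD * (1 + CT * CD))))) * ?t" .
    qed
  qed
  have b1: "inj (\<lambda>f. M (D f)) \<longrightarrow>
            (\<forall>g u1 u2. L u1 = 0 \<and> M u1 = g \<and> L u2 = 0 \<and> M u2 = g \<longrightarrow> u1 = u2)"
  proof (rule impI, intro allI)
    fix g u1 u2 assume inj: "inj (\<lambda>f. M (D f))"
    show "L u1 = 0 \<and> M u1 = g \<and> L u2 = 0 \<and> M u2 = g \<longrightarrow> u1 = u2"
    proof
      assume h: "L u1 = 0 \<and> M u1 = g \<and> L u2 = 0 \<and> M u2 = g"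
      define w where "w = u1 - u2"
      have wK: "w \<in> K" using h inK Kdiff w_def by blast
      have Mw: "M w = 0" using h inK Mdiff w_def by simp
      have w: "w = - D (Tr w)" using G wK Mw S0 by force
      have "M (D (- Tr w)) = M w" using w Dneg by simp
      hence "M (D (- Tr w)) = M (D 0)" using Mw D0 M0 by simp
      hence "- Tr w = 0" using inj unfolding inj_def by blast
      hence "w = 0" using w D0 by simp
      thus "u1 = u2" using w_def by simp
    qed
  qed
  have b2: "(\<exists>C0. \<forall>f. nD f \<le> C0 * nN (M (D f))) \<longrightarrow>
            (\<exists>C1. \<forall>u. L u = 0 \<longrightarrow> nX u \<le> C1 * nN (M u))"
  proof
    assume "\<exists>C0. \<forall>f. nD f \<le> C0 * nN (M (D f))"
    then obtain C00 where C00: "\<And>f. nD f \<le> C00 * nN (M (D f))" by blast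
    define C0 where "C0 = max C00 0"
    have C0p: "C0 \<ge> 0" unfolding C0_def by simp
    have C0: "nD f \<le> C0 * nN (M (D f))" for f
      using C00[of f] NN(1)[of "M (D f)"] unfolding C0_def
      by (smt (verit) mult_right_mono max.cobounded1)
    show "\<exists>C1. \<forall>u. L u = 0 \<longrightarrow> nX u \<le> C1 * nN (M u)"
    proof (intro exI allI impI)
      fix u assume "L u = 0"
      hence uK: "u \<in> K" by (rule inK)
      let ?m = "nN (M u)"
      have "M u = M (- D (Tr u)) + M (S (M u))"
        using G uK Madd Kneg D2 S2 by metis
      hence "M (D (Tr u)) = M (S (M u)) + - M u"
        using Mneg D2 by (metis add.commute add_minus_cancel minus_add_cancel add.left_commute)
      hence "nN (M (D (Tr u))) \<le> kN * (nN (M (S (M u))) + nN (- M u))"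
        using kN(2) by metis
      also have "\<dots> \<le> kN * (CM * (CS * ?m) + ?m)"
        using NN(3) CM(2)[OF S2[rule_format]] CS(2)[of "M u"] CM(1) kN(1)
        by (smt (verit) mult_left_mono)
      finally have nT: "nD (Tr u) \<le> C0 * (kN * (CM * (CS * ?m) + ?m))"
        using C0[of "Tr u"] C0p by (smt (verit) mult_left_mono)
      have "nX u \<le> kX * (nX (- D (Tr u)) + nX (S (M u)))"
        using kX(2) G uK by metis
      also have "\<dots> \<le> kX * (CD * (C0 * (kN * (CM * (CS * ?m) + ?m))) + CS * ?m)"
        using X(3) CD(2)[of "Tr u"] CS(2)[of "M u"] nT CD(1) kX(1)
        by (smt (verit) mult_left_mono)
      also have "\<dots> = (kX * (CD * (C0 * (kN * (CM * CS + 1))) + CS)) * ?m"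
        by (simp add: algebra_simps)
      finally show "nX u \<le> (kX * (CD * (C0 * (kN * (CM * CS + 1))) + CS)) * ?m" .
    qed
  qed
  show ?thesis using a1 a2 b1 b2 by blast
qed

end
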